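(* Let $\mathcal{M}$ be either (a) the space of graph Laplacians of simple, undirected, weighted networks with a fixed number $m$ of nodes and bounded edge weights, or (b) the space of $m\times m$ covariance matrices with bounded diagonal entries, equipped with the Frobenius distance $d_F$, and with geodesic transport maps $\Gamma_{\alpha,\beta}(\omega)=\omega+(\beta-\alpha)$. Then: (1) there is $C_1>0$ with $d_F(\Gamma_{\alpha,\beta}(\omega),\Gamma_{\alpha,\beta}(\zeta))\le C_1d_F(\omega,\zeta)$ for all $\alpha,\beta,\omega,\zeta\in\mathcal{M}$; (2) there is $C_2>0$ with $d_F(\Gamma_{\alpha_1,\beta_1}(\omega),\Gamma_{\alpha_2,\beta_2}(\omega))\le C_2\{d_F(\alpha_1,\alpha_2)+d_F(\beta_1,\beta_2)\}$ for all $\alpha_1,\alpha_2,\beta_1,\beta_2,\omega\in\mathcal{M}$; (3) for every random element $Y$ of $\mathcal{M}$: (i) the Fréchet mean $\nu=\operatorname{argmin}_{\omega\in\mathcal{M}}E\,d_F^2(Y,\omega)$ exists and is unique, the empirical Fréchet mean of an i.i.d. sample exists and is unique almost surely, and $\inf_{d_F(\nu,\omega)>\varepsilon}E\,d_F^2(Y,\omega)>E\,d_F^2(Y,\nu)$ for every $\varepsilon>0$; (ii) $\int_0^1\sqrt{1+\log N(\delta\epsilon,B_\delta(\nu),d_F)}\,d\epsilon=O(1)$ as $\delta\to0$, with $B_\delta(\nu)$ the $\delta$-ball around $\nu$ and $N(\cdot)$ its covering number; (iii) there are $\eta>0$, $C>0$, $\kappa>1$ with $E\,d_F^2(Y,\omega)-E\,d_F^2(Y,\nu)\ge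 C\,d_F^\kappa(\nu,\omega)$ whenever $d_F(\nu,\omega)<\eta$.
   Context: The graph Laplacian of a weighted network with adjacency (weight) matrix $W$ is $\mathrm{diag}(W\mathbf{1})-W$; it uniquely represents the network. $d_F(A,B)=\|A-B\|_F$ is the Frobenius distance. *)

theory Defs
  imports "HOL-Probability.Probability" "HOL-Library.Landau_Symbols"
begin

text \<open>m x m real matrices are modelled as real^'m^'m with 'm a finite index type
  (the fixed number m of nodes is CARD('m)).\<close>

definition frob_dist :: "real^'m^'m \<Rightarrow> real^'m^'m \<Rightarrow> real" where
  "frob_dist A B = sqrt (\<Sum>i\<in>UNIV. \<Sum>j\<in>UNIV. (A$i$j - B$i$j)^2)"

definition graph_laplacian :: "real^'m^'m \<Rightarrow> real^'m^'m" where
  "graph_laplacian W = (\<chi> i j. (if i = j then (\<Sum>k\<in>UNIV. W$i$k) else 0) - W$i$j)"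

definition laplacian_space :: "real \<Rightarrow> (real^'m^'m) set" where
  "laplacian_space c = {graph_laplacian W | W.
      (\<forall>i j. W$i$j = W$j$i) \<and> (\<forall>i. W$i$i = 0) \<and> (\<forall>i j. 0 \<le> W$i$j \<and> W$i$j \<le> c)}"

definition covariance_space :: "real \<Rightarrow> (real^'m^'m) set" where
  "covariance_space c = {S. transpose S = S \<and> (\<forall>x. 0 \<le> x \<bullet> (S *v x)) \<and> (\<forall>i. S$i$i \<le> c)}"

definition transport :: "real^'m^'m \<Rightarrow> real^'m^'m \<Rightarrow> real^'m^'m \<Rightarrow> real^'m^'m" where
  "transport \<alpha> \<beta> \<omega> = \<omega> + (\<beta> - \<alpha>)"

definition frob_ball :: "(real^'m^'m) set \<Rightarrow> real^'m^'m \<Rightarrow> real \<Rightarrow> (real^'m^'m) set" where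
  "frob_ball M \<nu> r = {\<omega> \<in> M. frob_dist \<nu> \<omega> < r}"

definition covering_number :: "(real^'m^'m) set \<Rightarrow> real \<Rightarrow> (real^'m^'m) set \<Rightarrow> nat" where
  "covering_number M r S = (LEAST n. \<exists>C. finite C \<and> card C = n \<and> C \<subseteq> M \<and>
      S \<subseteq> (\<Union>c\<in>C. {x. frob_dist c x \<le> r}))"

end

theory Submission
  imports Defs
begin


lemma frob_dist_eq: "frob_dist A B = dist A B"
proof -
  have "dist A B = sqrt (\<Sum>i\<in>UNIV. (norm ((A - B)$i))^2)"
    by (simp add: dist_norm norm_vec_def L2_set_def)
  also have "\<dots> = sqrt (\<Sum>i\<in>UNIV. \<Sum>j\<in>UNIV. (A$i$j - B$i$j)^2)"
    by (simp add: norm_vec_def L2_set_def sum_nonneg)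
  finally show ?thesis unfolding frob_dist_def by simp
qed

lemma bounded_entries:
  fixes S :: "(real^'m^'m) set"
  assumes "\<And>A i j. A \<in> S \<Longrightarrow> \<bar>A$i$j\<bar> \<le> B"
  shows "bounded S"
proof -
  have "norm A \<le> sqrt (\<Sum>i\<in>(UNIV::'m set). \<Sum>j\<in>(UNIV::'m set). B^2)" if "A \<in> S" for A
  proof -
    have "norm A = frob_dist A 0" by (simp add: frob_dist_eq)
    also have "\<dots> \<le> sqrt (\<Sum>i\<in>(UNIV::'m set). \<Sum>j\<in>(UNIV::'m set). B^2)"
      unfolding frob_dist_def
      apply (rule real_sqrt_le_mono)
      apply (intro sum_mono)
    proof -
      fix i j
      have "\<bar>A$i$j\<bar>^2 \<le> B^2" by (rule power_mono) (use assms[OF that] in auto)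
      then show "(A$i$j - (0::real^'m^'m)$i$j)^2 \<le> B^2" by simp
    qed
    finally show ?thesis .
  qed
  then show ?thesis unfolding bounded_iff by blast
qed

definition Wset :: "real \<Rightarrow> (real^'m^'m) set" where
  "Wset c = {W. (\<forall>i j. W$i$j = W$j$i) \<and> (\<forall>i. W$i$i = 0) \<and> (\<forall>i j. 0 \<le> W$i$j \<and> W$i$j \<le> c)}"

lemma lap_image: "laplacian_space c = graph_laplacian ` Wset c"
  unfolding laplacian_space_def Wset_def by auto

lemma linear_graph_laplacian: "linear graph_laplacian"
  by (rule linearI) (auto simp: graph_laplacian_def vec_eq_iff sum.distrib sum_distrib_left algebra_simps)

lemma Wset_compact: "compact (Wset c)"
proof -
  have cl: "closed (Wset c)"
    unfolding Wset_def
    by (intro closed_Collect_conj closed_Collect_all closed_Collect_eq closed_Collect_le continuous_intros)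
  have "bounded (Wset c)"
    by (rule bounded_entries[where B = "\<bar>c\<bar>"]) (auto simp: Wset_def intro: order_trans[OF _ abs_ge_self])
  with cl show ?thesis by (simp add: compact_eq_bounded_closed)
qed

lemma Wset_convex: "convex (Wset c)"
  unfolding convex_def Wset_def
proof (safe)
  fix x y :: "real^'a^'a" and u v :: real and i j
  assume h: "\<forall>i j. x $ i $ j = x $ j $ i" "\<forall>i. x $ i $ i = 0" "\<forall>i j. 0 \<le> x $ i $ j \<and> x $ i $ j \<le> c"
     "\<forall>i j. y $ i $ j = y $ j $ i" "\<forall>i. y $ i $ i = 0" "\<forall>i j. 0 \<le> y $ i $ j \<and> y $ i $ j \<le> c"
     "0 \<le> u" "0 \<le> v" "u + v = 1"
  show "(u *\<^sub>R x + v *\<^sub>R y) $ i $ j = (u *\<^sub>R x + v *\<^sub>R y) $ j $ i" using h by simp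
  show "(u *\<^sub>R x + v *\<^sub>R y) $ i $ i = 0" using h by simp
  show "0 \<le> (u *\<^sub>R x + v *\<^sub>R y) $ i $ j" using h by simp
  have "u * x$i$j + v * y$i$j \<le> u * c + v * c"
    using h by (intro add_mono mult_left_mono) auto
  then show "(u *\<^sub>R x + v *\<^sub>R y) $ i $ j \<le> c" using h by (simp add: distrib_right[symmetric])
qed

lemma lap_props:
  assumes "0 < c"
  shows "compact (laplacian_space c :: (real^'m^'m) set)" "convex (laplacian_space c :: (real^'m^'m) set)"
    "(0::real^'m^'m) \<in> laplacian_space c"
proof -
  have lin: "linear (graph_laplacian :: real^'m^'m \<Rightarrow> _)" by (rule linear_graph_laplacian)
  show "compact (laplacian_space c :: (real^'m^'m) set)"
    unfolding lap_image
    by (intro compact_continuous_image Wset_compact linear_continuous_on linear_conv_bounded_linear[THEN iffD1] lin)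
  show "convex (laplacian_space c :: (real^'m^'m) set)"
    unfolding lap_image by (intro convex_linear_image Wset_convex lin)
  have "graph_laplacian (0::real^'m^'m) = 0" by (simp add: graph_laplacian_def vec_eq_iff)
  moreover have "(0::real^'m^'m) \<in> Wset c" using assms by (simp add: Wset_def)
  ultimately show "(0::real^'m^'m) \<in> laplacian_space c" unfolding lap_image by force
qed

lemma psd_quad:
  fixes S :: "real^'m^'m"
  shows "(axis i 1 + s *\<^sub>R axis j 1) \<bullet> (S *v (axis i 1 + s *\<^sub>R axis j 1))
       = S$i$i + s * S$j$i + s * S$i$j + s * s * S$j$j"
  by (simp add: matrix_vector_right_distrib matrix_vector_mult_basis 
      matrix_vector_mult_scaleR inner_axis inner_axis' column_def algebra_simps)

lemma cov_alt: "covariance_space c = {S. (\<forall>i j. S$i$j = S$j$i) \<and>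
   (\<forall>x. 0 \<le> (\<Sum>i\<in>UNIV. x$i * (\<Sum>j\<in>UNIV. S$i$j * x$j))) \<and> (\<forall>i. S$i$i \<le> c)}"
  unfolding covariance_space_def
  by (auto simp: vec_eq_iff transpose_def inner_vec_def matrix_vector_mult_def)

lemma cov_props:
  assumes "0 < c"
  shows "compact (covariance_space c :: (real^'m^'m) set)" "convex (covariance_space c :: (real^'m^'m) set)"
    "(0::real^'m^'m) \<in> covariance_space c"
proof -
  have cl: "closed (covariance_space c :: (real^'m^'m) set)"
    unfolding cov_alt
    by (intro closed_Collect_conj closed_Collect_all closed_Collect_eq closed_Collect_le continuous_intros)
  have ent: "\<bar>S$i$j\<bar> \<le> c" if "S \<in> covariance_space c" for S :: "real^'m^'m" and i j
  proof -
    from that have sym: "S$j$i = S$i$j" and psd: "\<And>x. 0 \<le> x \<bullet> (S *v x)" and d: "S$i$i \<le> c" "S$j$j \<le> c"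
      by (auto simp: covariance_space_def vec_eq_iff transpose_def)
    have "0 \<le> S$i$i + 1 * S$j$i + 1 * S$i$j + 1 * 1 * S$j$j"
      using psd[of "axis i 1 + 1 *\<^sub>R axis j 1"] unfolding psd_quad .
    moreover have "0 \<le> S$i$i + (-1) * S$j$i + (-1) * S$i$j + (-1) * (-1) * S$j$j"
      using psd[of "axis i 1 + (-1) *\<^sub>R axis j 1"] unfolding psd_quad .
    ultimately show ?thesis using sym d by auto
  qed
  have "bounded (covariance_space c :: (real^'m^'m) set)"
    by (rule bounded_entries[where B = c]) (rule ent)
  with cl show "compact (covariance_space c :: (real^'m^'m) set)" by (simp add: compact_eq_bounded_closed)
  show "convex (covariance_space c :: (real^'m^'m) set)"
    unfolding convex_def covariance_space_def
  proof (safe)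
    fix x y :: "real^'m^'m" and u v :: real
    assume h: "transpose x = x" "\<forall>z. 0 \<le> z \<bullet> (x *v z)" "\<forall>i. x $ i $ i \<le> c"
      "transpose y = y" "\<forall>z. 0 \<le> z \<bullet> (y *v z)" "\<forall>i. y $ i $ i \<le> c" "0 \<le> u" "0 \<le> v" "u + v = 1"
    show "transpose (u *\<^sub>R x + v *\<^sub>R y) = u *\<^sub>R x + v *\<^sub>R y"
      using h by (simp add: transpose_def vec_eq_iff)
    fix z :: "real^'m"
    show "0 \<le> z \<bullet> ((u *\<^sub>R x + v *\<^sub>R y) *v z)"
      using h by (simp add: matrix_vector_mult_add_rdistrib scaleR_matrix_vector_assoc[symmetric] inner_add_right)
    fix i
    have "u * x$i$i + v * y$i$i \<le> u * c + v * c"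
      using h by (intro add_mono mult_left_mono) auto
    then show "(u *\<^sub>R x + v *\<^sub>R y) $ i $ i \<le> c" using h by (simp add: distrib_right[symmetric])
  qed
  show "(0::real^'m^'m) \<in> covariance_space c"
    using assms by (simp add: covariance_space_def transpose_def vec_eq_iff)
qed



lemma floor_eq_close:
  fixes a b :: real
  assumes "\<lfloor>a\<rfloor> = \<lfloor>b\<rfloor>"
  shows "\<bar>a - b\<bar> < 1"
  using assms floor_correct[of a] floor_correct[of b] by linarith

lemma cover_count:
  fixes M S :: "(real^'m^'m) set" and \<nu> :: "real^'m^'m"
  assumes SM: "S \<subseteq> M" and ball: "\<And>\<omega>. \<omega> \<in> S \<Longrightarrow> dist \<nu> \<omega> < \<delta>" and r: "0 < r" and d: "0 < \<delta>"
  shows "\<exists>C. finite C \<and> C \<subseteq> M \<and> S \<subseteq> (\<Union>c\<in>C. {x. frob_dist c x \<le> r}) \<and>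
     card C \<le> (2 * nat \<lceil>\<delta> * sqrt (real (CARD('m) * CARD('m))) / r\<rceil> + 1) ^ (CARD('m) * CARD('m))"
proof -
  define D where "D = CARD('m) * CARD('m)"
  have Dpos: "0 < D" unfolding D_def by simp
  define h where "h = r / sqrt (real D)"
  have hpos: "0 < h" unfolding h_def using r Dpos by simp
  have dh: "\<delta> / h = \<delta> * sqrt (real D) / r" unfolding h_def using r Dpos by (simp add: field_simps)
  define Li where "Li = \<lceil>\<delta> / h\<rceil>"
  have Li0: "0 \<le> Li" proof -
    have "0 < \<delta> / h" using d hpos by simp
    then show ?thesis unfolding Li_def by linarith
  qed
  define q where "q = (\<lambda>\<omega>::real^'m^'m. (\<lambda>(i,j). \<lfloor>(\<omega>$i$j - \<nu>$i$j) / h\<rfloor>) :: 'm \<times> 'm \<Rightarrow> int)"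
  define rep where "rep = (\<lambda>k. SOME \<omega>. \<omega> \<in> S \<and> q \<omega> = k)"
  define C where "C = rep ` q ` S"
  define Box where "Box = PiE (UNIV :: ('m \<times> 'm) set) (\<lambda>_. {-Li..Li})"
  have qBox: "q ` S \<subseteq> Box"
  proof
    fix k assume "k \<in> q ` S"
    then obtain \<omega> where w: "\<omega> \<in> S" and k: "k = q \<omega>" by auto
    have "k p \<in> {-Li..Li}" for p
    proof (cases p)
      case (Pair i j)
      have "\<bar>(\<omega> - \<nu>)$i$j\<bar> \<le> norm ((\<omega> - \<nu>)$i)" by (rule component_le_norm_cart)
      also have "\<dots> \<le> norm (\<omega> - \<nu>)" by (rule Finite_Cartesian_Product.norm_nth_le)
      also have "\<dots> < \<delta>" using ball[OF w] by (simp add: dist_norm norm_minus_commute)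
      finally have lt: "\<bar>\<omega>$i$j - \<nu>$i$j\<bar> < \<delta>" by simp
      define t where "t = (\<omega>$i$j - \<nu>$i$j) / h"
      have "\<bar>t\<bar> < \<delta> / h" unfolding t_def using lt hpos by (simp add: abs_div divide_strict_right_mono)
      moreover have "\<delta> / h \<le> of_int Li" unfolding Li_def by simp
      ultimately have "- of_int Li \<le> t" "t \<le> of_int Li" by linarith+
      then have "-Li \<le> \<lfloor>t\<rfloor>" "\<lfloor>t\<rfloor> \<le> Li" by (simp_all add: le_floor_iff floor_le_iff)
      then show ?thesis using k Pair by (simp add: q_def t_def)
    qed
    then show "k \<in> Box" unfolding Box_def by auto
  qed
  have fB: "finite Box" unfolding Box_def by (intro finite_PiE) auto
  have cB: "card Box = (2 * nat Li + 1) ^ D"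
  proof -
    have "card Box = (\<Prod>p\<in>(UNIV::('m\<times>'m) set). card {-Li..Li})" unfolding Box_def
      by (rule card_PiE) simp
    also have "\<dots> = (card {-Li..Li}) ^ D" by (simp add: D_def card_cartesian_product flip: UNIV_Times_UNIV)
    also have "card {-Li..Li} = 2 * nat Li + 1" using Li0 by simp
    finally show ?thesis .
  qed
  have fin: "finite C" unfolding C_def using finite_subset[OF qBox fB] by simp
  have repS: "rep (q \<omega>) \<in> S \<and> q (rep (q \<omega>)) = q \<omega>" if "\<omega> \<in> S" for \<omega>
    unfolding rep_def by (rule someI[of _ \<omega>]) (use that in simp)
  have CS: "C \<subseteq> S" unfolding C_def using repS by auto
  have cardC: "card C \<le> card Box"
    unfolding C_def by (rule order_trans[OF card_image_le card_mono]) (use finite_subset[OF qBox fB] qBox fB in auto)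
  have cov: "S \<subseteq> (\<Union>c\<in>C. {x. frob_dist c x \<le> r})"
  proof
    fix \<omega> assume w: "\<omega> \<in> S"
    define p where "p = rep (q \<omega>)"
    have pC: "p \<in> C" unfolding p_def C_def using w by auto
    have qp: "q p = q \<omega>" using repS[OF w] unfolding p_def by simp
    have ent: "(p$i$j - \<omega>$i$j)^2 \<le> h^2" for i j
    proof -
      have "\<lfloor>(p$i$j - \<nu>$i$j) / h\<rfloor> = \<lfloor>(\<omega>$i$j - \<nu>$i$j) / h\<rfloor>"
        using fun_cong[OF qp, of "(i,j)"] by (simp add: q_def)
      then have "\<bar>(p$i$j - \<nu>$i$j) / h - (\<omega>$i$j - \<nu>$i$j) / h\<bar> < 1" by (rule floor_eq_close)
      then have "\<bar>(p$i$j - \<omega>$i$j) / h\<bar> < 1" by (simp add: diff_divide_distrib)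
      then have "\<bar>p$i$j - \<omega>$i$j\<bar> < h" using hpos by (simp add: abs_div)
      then have "\<bar>p$i$j - \<omega>$i$j\<bar>^2 \<le> h^2" by (intro power_mono) auto
      then show ?thesis by simp
    qed
    have "frob_dist p \<omega> \<le> sqrt (\<Sum>i\<in>(UNIV::'m set). \<Sum>j\<in>(UNIV::'m set). h^2)"
      unfolding frob_dist_def by (intro real_sqrt_le_mono sum_mono ent)
    also have "(\<Sum>i\<in>(UNIV::'m set). \<Sum>j\<in>(UNIV::'m set). h^2) = real D * h^2" by (simp add: D_def)
    also have "\<dots> = r^2" unfolding h_def using Dpos by (simp add: power_divide)
    also have "sqrt (r^2) = r" using r by simp
    finally show "\<omega> \<in> (\<Union>c\<in>C. {x. frob_dist c x \<le> r})" using pC by blast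
  qed
  show ?thesis
    apply (rule exI[of _ C])
    using fin CS SM cov cardC cB dh unfolding Li_def D_def by auto
qed




lemma cover_ex:
  fixes M S :: "(real^'m^'m) set" and \<nu> :: "real^'m^'m"
  assumes "S \<subseteq> M" "\<And>\<omega>. \<omega> \<in> S \<Longrightarrow> dist \<nu> \<omega> < \<delta>" "0 < r" "0 < \<delta>"
  obtains C where "finite C" "C \<subseteq> M" "S \<subseteq> (\<Union>c\<in>C. {x. frob_dist c x \<le> r})"
    "card C \<le> (2 * nat \<lceil>\<delta> * sqrt (real (CARD('m) * CARD('m))) / r\<rceil> + 1) ^ (CARD('m) * CARD('m))"
proof -
  have "\<exists>C. finite C \<and> C \<subseteq> M \<and> S \<subseteq> (\<Union>c\<in>C. {x. frob_dist c x \<le> r}) \<and>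
     card C \<le> (2 * nat \<lceil>\<delta> * sqrt (real (CARD('m) * CARD('m))) / r\<rceil> + 1) ^ (CARD('m) * CARD('m))"
    by (rule cover_count[where \<nu>=\<nu> and \<delta>=\<delta> and r=r and S=S and M=M]) (use assms in auto)
  then show ?thesis using that by (elim exE conjE) 
qed

lemma cn_upper:
  fixes M S :: "(real^'m^'m) set" and \<nu> :: "real^'m^'m"
  assumes "S \<subseteq> M" "\<And>\<omega>. \<omega> \<in> S \<Longrightarrow> dist \<nu> \<omega> < \<delta>" "0 < r" "0 < \<delta>"
  shows "covering_number M r S \<le> (2 * nat \<lceil>\<delta> * sqrt (real (CARD('m) * CARD('m))) / r\<rceil> + 1) ^ (CARD('m) * CARD('m))"
proof -
  obtain C where C: "finite C" "C \<subseteq> M" "S \<subseteq> (\<Union>c\<in>C. {x. frob_dist c x \<le> r})"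
    "card C \<le> (2 * nat \<lceil>\<delta> * sqrt (real (CARD('m) * CARD('m))) / r\<rceil> + 1) ^ (CARD('m) * CARD('m))"
    by (rule cover_ex[where \<nu>=\<nu> and \<delta>=\<delta> and r=r and S=S and M=M]) (use assms in auto)
  have "covering_number M r S \<le> card C"
    unfolding covering_number_def
    by (rule Least_le, rule exI[of _ C]) (use C in simp)
  with C(4) show ?thesis by linarith
qed

lemma cn_exists_props:
  fixes M S :: "(real^'m^'m) set" and \<nu> :: "real^'m^'m"
  assumes "S \<subseteq> M" "\<And>\<omega>. \<omega> \<in> S \<Longrightarrow> dist \<nu> \<omega> < \<delta>" "0 < r" "0 < \<delta>"
  obtains C where "finite C" "card C = covering_number M r S" "C \<subseteq> M" "S \<subseteq> (\<Union>c\<in>C. {x. frob_dist c x \<le> r})"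
proof -
  obtain C where C: "finite C" "C \<subseteq> M" "S \<subseteq> (\<Union>c\<in>C. {x. frob_dist c x \<le> r})"
    by (rule cover_ex[where \<nu>=\<nu> and \<delta>=\<delta> and r=r and S=S and M=M]) (use assms in auto)
  define P where "P = (\<lambda>n. \<exists>C. finite C \<and> card C = n \<and> C \<subseteq> M \<and> S \<subseteq> (\<Union>c\<in>C. {x. frob_dist c x \<le> r}))"
  have eq: "covering_number M r S = Least P" unfolding covering_number_def P_def ..
  have "P (card C)" unfolding P_def using C by auto
  then have "P (Least P)" by (rule LeastI)
  then obtain C' where "finite C'" "card C' = Least P" "C' \<subseteq> M" "S \<subseteq> (\<Union>c\<in>C'. {x. frob_dist c x \<le> r})"
    unfolding P_def by (elim exE conjE)
  then show ?thesis by (intro that) (simp_all add: eq)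
qed

lemma cn_pos:
  fixes M S :: "(real^'m^'m) set" and \<nu> :: "real^'m^'m"
  assumes "S \<subseteq> M" "\<And>\<omega>. \<omega> \<in> S \<Longrightarrow> dist \<nu> \<omega> < \<delta>" "0 < r" "0 < \<delta>" "S \<noteq> {}"
  shows "1 \<le> covering_number M r S"
proof -
  obtain C where C: "finite C" "card C = covering_number M r S" "S \<subseteq> (\<Union>c\<in>C. {x. frob_dist c x \<le> r})"
    by (rule cn_exists_props[where \<nu>=\<nu> and \<delta>=\<delta> and r=r and S=S and M=M]) (use assms in auto)
  then have "C \<noteq> {}" using assms(5) by auto
  then have "0 < card C" using C(1) by (simp add: card_gt_0_iff)
  then show ?thesis using C(2) by linarith
qed

lemma cn_mono:
  fixes M S :: "(real^'m^'m) set" and \<nu> :: "real^'m^'m"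
  assumes "S \<subseteq> M" "\<And>\<omega>. \<omega> \<in> S \<Longrightarrow> dist \<nu> \<omega> < \<delta>" "0 < r1" "0 < \<delta>" "r1 \<le> r2"
  shows "covering_number M r2 S \<le> covering_number M r1 S"
proof -
  obtain C where C: "finite C" "card C = covering_number M r1 S" "C \<subseteq> M" "S \<subseteq> (\<Union>c\<in>C. {x. frob_dist c x \<le> r1})"
    by (rule cn_exists_props[where \<nu>=\<nu> and \<delta>=\<delta> and r=r1 and S=S and M=M]) (use assms in auto)
  have cov2: "S \<subseteq> (\<Union>c\<in>C. {x. frob_dist c x \<le> r2})"
  proof
    fix x assume "x \<in> S"
    then obtain c where "c \<in> C" "frob_dist c x \<le> r1" using C(4) by (auto simp del: mem_Collect_eq)
    then show "x \<in> (\<Union>c\<in>C. {x. frob_dist c x \<le> r2})" using assms(5) by force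
  qed
  have "covering_number M r2 S \<le> card C"
    unfolding covering_number_def
    by (rule Least_le, rule exI[of _ C]) (use C cov2 in simp)
  with C(2) show ?thesis by simp
qed




lemma sqrt_one_plus_le: "0 \<le> x \<Longrightarrow> sqrt (1 + x) \<le> 1 + sqrt x"
  by (rule real_le_lsqrt) (auto simp: power2_eq_square algebra_simps)

lemma integrand_bound:
  fixes M :: "(real^'m^'m) set" and \<nu> :: "real^'m^'m"
  assumes nu: "\<nu> \<in> M" and d: "0 < \<delta>" and e: "0 < \<epsilon>" "\<epsilon> \<le> 1"
  defines "D \<equiv> real (CARD('m) * CARD('m))"
  shows "1 \<le> sqrt (1 + ln (real (covering_number M (\<delta> * \<epsilon>) (frob_ball M \<nu> \<delta>))))"
    and "sqrt (1 + ln (real (covering_number M (\<delta> * \<epsilon>) (frob_ball M \<nu> \<delta>))))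
          \<le> 1 + sqrt (D * (2 * sqrt D + 3)) * \<epsilon> powr (-1/2)"
proof -
  define S where "S = frob_ball M \<nu> \<delta>"
  define N where "N = covering_number M (\<delta> * \<epsilon>) S"
  have SM: "S \<subseteq> M" unfolding S_def frob_ball_def by auto
  have ball: "\<And>\<omega>. \<omega> \<in> S \<Longrightarrow> dist \<nu> \<omega> < \<delta>" unfolding S_def frob_ball_def by (auto simp: frob_dist_eq)
  have nuS: "\<nu> \<in> S" unfolding S_def frob_ball_def using nu d by (simp add: frob_dist_eq)
  have r: "0 < \<delta> * \<epsilon>" using d e by simp
  have N1: "1 \<le> N" unfolding N_def
    by (rule cn_pos[where \<nu>=\<nu> and \<delta>=\<delta>]) (use SM ball r d nuS in auto)
  have Nup: "N \<le> (2 * nat \<lceil>\<delta> * sqrt D / (\<delta> * \<epsilon>)\<rceil> + 1) ^ (CARD('m) * CARD('m))"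
    unfolding N_def D_def
    by (rule cn_upper[where \<nu>=\<nu> and \<delta>=\<delta>]) (use SM ball r d in auto)
  have c0: "0 < CARD('m) * CARD('m)" by simp
  then have c1: "1 \<le> CARD('m) * CARD('m)" by linarith
  have Dpos: "1 \<le> D" unfolding D_def using c1 by (metis of_nat_1 of_nat_le_iff)
  define K where "K = 2 * sqrt D + 3"
  have "0 \<le> sqrt D" using Dpos by simp
  then have Kpos: "0 < K" unfolding K_def by linarith
  have q: "\<delta> * sqrt D / (\<delta> * \<epsilon>) = sqrt D / \<epsilon>" using d by simp
  have ceil: "real (nat \<lceil>sqrt D / \<epsilon>\<rceil>) \<le> sqrt D / \<epsilon> + 1"
  proof -
    have "0 \<le> sqrt D / \<epsilon>" using e \<open>0 \<le> sqrt D\<close> by simp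
    then show ?thesis by (simp add: of_nat_nat)
  qed
  have "3 \<le> 3 / \<epsilon>" using e by (simp add: field_simps)
  then have base: "real (2 * nat \<lceil>sqrt D / \<epsilon>\<rceil> + 1) \<le> K / \<epsilon>"
    using ceil e unfolding K_def by (simp add: field_simps) 
  have "real N \<le> real ((2 * nat \<lceil>sqrt D / \<epsilon>\<rceil> + 1) ^ (CARD('m) * CARD('m)))"
  proof -
    have "N \<le> (2 * nat \<lceil>sqrt D / \<epsilon>\<rceil> + 1) ^ (CARD('m) * CARD('m))" using Nup unfolding q .
    then show ?thesis by (subst of_nat_le_iff)
  qed
  also have "\<dots> = (real (2 * nat \<lceil>sqrt D / \<epsilon>\<rceil> + 1)) ^ (CARD('m) * CARD('m))" by (simp only: of_nat_power)
  also have "\<dots> \<le> (K / \<epsilon>) ^ (CARD('m) * CARD('m))" by (rule power_mono[OF base]) simp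
  finally have NK: "real N \<le> (K / \<epsilon>) ^ (CARD('m) * CARD('m))" .
  have Npos: "0 < real N" using N1 by simp
  have "ln (real N) \<le> ln ((K / \<epsilon>) ^ (CARD('m) * CARD('m)))"
    by (rule ln_mono[OF NK Npos])
  also have "\<dots> = D * ln (K / \<epsilon>)" by (simp only: ln_realpow D_def)
  also have "\<dots> \<le> D * (K / \<epsilon>)" by (intro mult_left_mono less_imp_le[OF ln_less_self]) (use Dpos Kpos e in auto)
  finally have lnN: "ln (real N) \<le> D * K / \<epsilon>" by (simp only: times_divide_eq_right)
  have lnN0: "0 \<le> ln (real N)" using N1 by simp
  show "1 \<le> sqrt (1 + ln (real (covering_number M (\<delta> * \<epsilon>) (frob_ball M \<nu> \<delta>))))"
  proof -
    have one: "1 \<le> sqrt (1 + ln (real N))" using lnN0 by simp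
    then show ?thesis by (simp only: N_def S_def)
  qed
  have "sqrt (1 + ln (real N)) \<le> sqrt (1 + D * K / \<epsilon>)" using lnN by simp
  also have "\<dots> \<le> 1 + sqrt (D * K / \<epsilon>)" by (intro sqrt_one_plus_le divide_nonneg_pos mult_nonneg_nonneg) (use Dpos Kpos e in auto)
  also have "sqrt (D * K / \<epsilon>) = sqrt (D * K) * \<epsilon> powr (-1/2)"
  proof -
    have "\<epsilon> powr (-1/2) = 1 / sqrt \<epsilon>"
      using e by (metis divide_minus_left powr_half_sqrt powr_minus_divide less_imp_le)
    then show ?thesis by (simp only: real_sqrt_divide times_divide_eq_right mult_1_right)
  qed
  finally have fin: "sqrt (1 + ln (real N)) \<le> 1 + sqrt (D * K) * \<epsilon> powr (-1/2)" .
  show "sqrt (1 + ln (real (covering_number M (\<delta> * \<epsilon>) (frob_ball M \<nu> \<delta>))))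
          \<le> 1 + sqrt (D * (2 * sqrt D + 3)) * \<epsilon> powr (-1/2)"
    using fin by (simp only: N_def S_def K_def)
qed



definition cfun :: "(real^'m^'m) set \<Rightarrow> real^'m^'m \<Rightarrow> real \<Rightarrow> real \<Rightarrow> real" where
  "cfun M \<nu> \<delta> \<epsilon> = sqrt (1 + ln (real (covering_number M (\<delta> * \<epsilon>) (frob_ball M \<nu> \<delta>))))"

lemma cfun_antimono:
  fixes M :: "(real^'m^'m) set" and \<nu> :: "real^'m^'m"
  assumes nu: "\<nu> \<in> M" and d: "0 < \<delta>" and ab: "0 < a" "a \<le> b"
  shows "cfun M \<nu> \<delta> b \<le> cfun M \<nu> \<delta> a"
proof -
  define S where "S = frob_ball M \<nu> \<delta>"
  have SM: "S \<subseteq> M" unfolding S_def frob_ball_def by auto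
  have ball: "\<And>\<omega>. \<omega> \<in> S \<Longrightarrow> dist \<nu> \<omega> < \<delta>" unfolding S_def frob_ball_def by (auto simp: frob_dist_eq)
  have nuS: "\<nu> \<in> S" unfolding S_def frob_ball_def using nu d by (simp add: frob_dist_eq)
  have le: "covering_number M (\<delta> * b) S \<le> covering_number M (\<delta> * a) S"
    by (rule cn_mono[where \<nu>=\<nu> and \<delta>=\<delta>]) (use SM ball d ab in auto)
  have pos: "1 \<le> covering_number M (\<delta> * b) S"
    by (rule cn_pos[where \<nu>=\<nu> and \<delta>=\<delta>]) (use SM ball d ab nuS in auto)
  have "ln (real (covering_number M (\<delta> * b) S)) \<le> ln (real (covering_number M (\<delta> * a) S))"
    by (rule ln_mono) (use le pos in auto)
  then show ?thesis unfolding cfun_def S_def by simp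
qed

lemma g_integrable: "(\<lambda>\<epsilon>::real. 1 + A * \<epsilon> powr (-1/2)) integrable_on {0..1}"
proof -
  have "(\<lambda>\<epsilon>::real. \<epsilon> powr (-1/2)) integrable_on {0..1}"
    by (rule integrable_on_powr_from_0) auto
  then have "(\<lambda>\<epsilon>::real. of_real A * \<epsilon> powr (-1/2)) integrable_on {0..1}"
    by (rule integrable_on_cmult_left)
  then show ?thesis by (intro integrable_add integrable_const_ivl) simp
qed

lemma neg0: "negligible (sym_diff {0..1::real} {0<..1})"
  by (rule negligible_subset[of "{0}"]) auto

lemma cfun_integral:
  fixes M :: "(real^'m^'m) set" and \<nu> :: "real^'m^'m"
  assumes nu: "\<nu> \<in> M" and d: "0 < \<delta>"
  defines "D \<equiv> real (CARD('m) * CARD('m))"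
  defines "g \<equiv> (\<lambda>\<epsilon>::real. 1 + sqrt (D * (2 * sqrt D + 3)) * \<epsilon> powr (-1/2))"
  shows "cfun M \<nu> \<delta> integrable_on {0..1}"
    and "0 \<le> integral {0..1} (cfun M \<nu> \<delta>)"
    and "integral {0..1} (cfun M \<nu> \<delta>) \<le> integral {0..1} g"
proof -
  let ?f = "cfun M \<nu> \<delta>"
  let ?S = "{0<..1::real}"
  have gi: "g integrable_on {0..1}" unfolding g_def by (rule g_integrable)
  then have gi': "g integrable_on ?S" using integrable_spike_set_eq[OF neg0] by blast
  have bnd: "?f e \<le> g e" "1 \<le> ?f e" if "e \<in> ?S" for e
    using integrand_bound[OF nu d, of e] that unfolding cfun_def g_def D_def by auto
  have mono: "mono_on ?S (\<lambda>e. - ?f e)"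
    by (rule mono_onI) (use cfun_antimono[OF nu d] in auto)
  have "space lborel = space lebesgue" "sets borel \<subseteq> sets lebesgue"
    by force+
  then have meas: "(\<lambda>e. - ?f e) \<in> borel_measurable (lebesgue_on ?S)"
    by (metis mono borel_measurable_mono_on_fnc borel_measurable_subalgebra mono_restrict_space space_lborel space_restrict_space)
  then have meas': "?f \<in> borel_measurable (lebesgue_on ?S)"
    using borel_measurable_uminus[OF meas] by simp
  have fi': "?f integrable_on ?S"
  proof (rule measurable_bounded_by_integrable_imp_integrable_real[OF meas' gi'])
    fix x assume x: "x \<in> ?S"
    have "1 \<le> ?f x" "?f x \<le> g x" using bnd[OF x] by auto
    then show "\<bar>?f x\<bar> \<le> g x" by (subst abs_of_nonneg) auto
  qed simp
  then show fi: "?f integrable_on {0..1}" using integrable_spike_set_eq[OF neg0] by blast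
  have eqf: "integral {0..1} ?f = integral ?S ?f"
    by (rule integral_spike_set) (rule negligible_subset[of "{0}"], auto)+
  have eqg: "integral {0..1} g = integral ?S g"
    by (rule integral_spike_set) (rule negligible_subset[of "{0}"], auto)+
  show "0 \<le> integral {0..1} ?f"
    unfolding eqf by (rule integral_nonneg[OF fi']) (use bnd in force)
  show "integral {0..1} ?f \<le> integral {0..1} g"
    unfolding eqf eqg by (rule integral_le[OF fi' gi']) (use bnd in auto)
qed




lemma dist_expand:
  fixes y m w :: "'a::real_inner"
  shows "(dist y w)^2 = (dist y m)^2 + 2 * ((y - m) \<bullet> (m - w)) + (dist m w)^2"
proof -
  have gen: "(norm (u + v))^2 = (norm u)^2 + 2 * (u \<bullet> v) + (norm v)^2" for u v :: 'a
    by (simp add: power2_norm_eq_inner inner_add_left inner_add_right inner_commute)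
  have "y - w = (y - m) + (m - w)" by simp
  then have "(norm (y - w))^2 = (norm ((y - m) + (m - w)))^2" by (simp only:)
  also have "\<dots> = (norm (y - m))^2 + 2 * ((y - m) \<bullet> (m - w)) + (norm (m - w))^2"
    by (rule gen)
  finally show ?thesis by (simp add: dist_norm)
qed

lemma proj_ineq:
  fixes M :: "'a::euclidean_space set"
  assumes "convex M" "closed M" "M \<noteq> {}" "\<omega> \<in> M"
  shows "(dist z (closest_point M z))^2 + (dist (closest_point M z) \<omega>)^2 \<le> (dist z \<omega>)^2"
proof -
  define p where "p = closest_point M z"
  have dot: "(z - p) \<bullet> (\<omega> - p) \<le> 0" unfolding p_def by (rule closest_point_dot[OF assms(1,2,4)])
  have "(dist z \<omega>)^2 = (dist z p)^2 + 2 * ((z - p) \<bullet> (p - \<omega>)) + (dist p \<omega>)^2" by (rule dist_expand)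
  moreover have "(z - p) \<bullet> (p - \<omega>) = - ((z - p) \<bullet> (\<omega> - p))" by (simp add: inner_diff_right)
  ultimately show ?thesis using dot unfolding p_def by linarith
qed

lemma quad_min:
  fixes M :: "'a::euclidean_space set" and F :: "'a \<Rightarrow> real"
  assumes M: "convex M" "closed M" "M \<noteq> {}" and a: "0 < a" and F: "\<And>\<omega>. F \<omega> = K + a * (dist z \<omega>)^2"
  shows "closest_point M z \<in> M"
    and "\<And>\<omega>. \<omega> \<in> M \<Longrightarrow> F (closest_point M z) + a * (dist (closest_point M z) \<omega>)^2 \<le> F \<omega>"
    and "\<And>\<nu>'. \<nu>' \<in> M \<Longrightarrow> (\<forall>\<omega>\<in>M. F \<nu>' \<le> F \<omega>) \<Longrightarrow> \<nu>' = closest_point M z"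
proof -
  show inM: "closest_point M z \<in> M" by (rule closest_point_in_set[OF M(2,3)])
  show ineq: "F (closest_point M z) + a * (dist (closest_point M z) \<omega>)^2 \<le> F \<omega>" if "\<omega> \<in> M" for \<omega>
  proof -
    have "(dist z (closest_point M z))^2 + (dist (closest_point M z) \<omega>)^2 \<le> (dist z \<omega>)^2"
      by (rule proj_ineq[OF M that])
    then have "a * ((dist z (closest_point M z))^2 + (dist (closest_point M z) \<omega>)^2) \<le> a * (dist z \<omega>)^2"
      using a by (intro mult_left_mono) auto
    then show ?thesis unfolding F by (simp add: algebra_simps)
  qed
  fix \<nu>' assume nu': "\<nu>' \<in> M" "\<forall>\<omega>\<in>M. F \<nu>' \<le> F \<omega>"
  have "F \<nu>' \<le> F (closest_point M z)" using nu' inM by blast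
  then have "a * (dist z \<nu>')^2 \<le> a * (dist z (closest_point M z))^2" unfolding F by simp
  then have "(dist z \<nu>')^2 \<le> (dist z (closest_point M z))^2" using a by simp
  then have "dist z \<nu>' \<le> dist z (closest_point M z)" by (simp add: power2_le_iff_abs_le)
  then have "\<forall>y\<in>M. dist z \<nu>' \<le> dist z y" using closest_point_le[OF M(2)] by (meson order_trans)
  then show "\<nu>' = closest_point M z" by (rule closest_point_unique[OF M(1,2) nu'(1)])
qed

lemma exp_decomp:
  fixes Y :: "'b \<Rightarrow> 'a::euclidean_space"
  assumes P: "prob_space P" and Ym: "Y \<in> borel_measurable P" and B: "\<And>x. x \<in> space P \<Longrightarrow> norm (Y x) \<le> B"
  shows "integrable P Y"
    and "\<And>c. integrable P (\<lambda>x. (dist (Y x) c)^2)"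
    and "\<And>\<omega>. (\<integral>x. (dist (Y x) \<omega>)^2 \<partial>P) = (\<integral>x. (dist (Y x) (integral\<^sup>L P Y))^2 \<partial>P) + (dist (integral\<^sup>L P Y) \<omega>)^2"
proof -
  interpret prob_space P by (rule P)
  show iY: "integrable P Y"
    by (rule integrable_const_bound[where B=B]) (use B Ym in auto)
  show id: "integrable P (\<lambda>x. (dist (Y x) c)^2)" for c
  proof (rule integrable_const_bound[where B="(B + norm c)^2"])
    show "AE x in P. norm ((dist (Y x) c)^2) \<le> (B + norm c)^2"
    proof (rule AE_I2)
      fix x assume x: "x \<in> space P"
      have "dist (Y x) c \<le> norm (Y x) + norm c" by (simp add: dist_norm norm_triangle_ineq4)
      also have "\<dots> \<le> B + norm c" using B[OF x] by simp
      finally have "dist (Y x) c \<le> B + norm c" .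
      then have "(dist (Y x) c)^2 \<le> (B + norm c)^2" by (intro power_mono) auto
      then show "norm ((dist (Y x) c)^2) \<le> (B + norm c)^2" by simp
    qed
    show "(\<lambda>x. (dist (Y x) c)^2) \<in> borel_measurable P" using Ym by measurable
  qed
  fix \<omega>
  define \<mu> where "\<mu> = integral\<^sup>L P Y"
  have pw: "(dist (Y x) \<omega>)^2 = (dist (Y x) \<mu>)^2 + 2 * ((Y x - \<mu>) \<bullet> (\<mu> - \<omega>)) + (dist \<mu> \<omega>)^2" for x
    by (rule dist_expand)
  have iD: "integrable P (\<lambda>x. Y x - \<mu>)" using iY by simp
  have i0: "(\<integral>x. (Y x - \<mu>) \<partial>P) = 0" using iY by (simp add: \<mu>_def prob_space)
  have iI: "(\<integral>x. (Y x - \<mu>) \<bullet> (\<mu> - \<omega>) \<partial>P) = 0"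
    using integral_inner_left[of "\<mu> - \<omega>" P "\<lambda>x. Y x - \<mu>"] iD i0 by simp
  have iI': "integrable P (\<lambda>x. (Y x - \<mu>) \<bullet> (\<mu> - \<omega>))" using iD by simp
  have "(\<integral>x. (dist (Y x) \<omega>)^2 \<partial>P) = (\<integral>x. (dist (Y x) \<mu>)^2 + 2 * ((Y x - \<mu>) \<bullet> (\<mu> - \<omega>)) + (dist \<mu> \<omega>)^2 \<partial>P)"
    unfolding pw ..
  also have "\<dots> = (\<integral>x. (dist (Y x) \<mu>)^2 \<partial>P) + 2 * (\<integral>x. (Y x - \<mu>) \<bullet> (\<mu> - \<omega>) \<partial>P) + (dist \<mu> \<omega>)^2"
    using id[of \<mu>] iI' by (simp add: prob_space)
  finally show "(\<integral>x. (dist (Y x) \<omega>)^2 \<partial>P) = (\<integral>x. (dist (Y x) (integral\<^sup>L P Y))^2 \<partial>P) + (dist (integral\<^sup>L P Y) \<omega>)^2"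
    using iI unfolding \<mu>_def by simp
qed

lemma sample_decomp:
  fixes y :: "nat \<Rightarrow> 'a::euclidean_space"
  assumes n: "0 < n"
  shows "(\<Sum>i<n. (dist (y i) \<omega>)^2) = (\<Sum>i<n. (dist (y i) ((1 / real n) *\<^sub>R (\<Sum>i<n. y i)))^2)
           + real n * (dist ((1 / real n) *\<^sub>R (\<Sum>i<n. y i)) \<omega>)^2"
proof -
  define m where "m = (1 / real n) *\<^sub>R (\<Sum>i<n. y i)"
  have s0: "(\<Sum>i<n. (y i - m)) = 0"
  proof -
    have "(\<Sum>i<n. (y i - m)) = (\<Sum>i<n. y i) - real n *\<^sub>R m" by (simp add: sum_subtractf sum_constant_scaleR)
    also have "real n *\<^sub>R m = (\<Sum>i<n. y i)" unfolding m_def using n by simp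
    finally show ?thesis by simp
  qed
  have "(\<Sum>i<n. (dist (y i) \<omega>)^2) = (\<Sum>i<n. (dist (y i) m)^2 + 2 * ((y i - m) \<bullet> (m - \<omega>)) + (dist m \<omega>)^2)"
    by (intro sum.cong refl dist_expand)
  also have "\<dots> = (\<Sum>i<n. (dist (y i) m)^2) + 2 * ((\<Sum>i<n. (y i - m)) \<bullet> (m - \<omega>)) + real n * (dist m \<omega>)^2"
    by (simp add: sum.distrib sum_distrib_left inner_sum_left)
  finally show ?thesis using s0 unfolding m_def by simp
qed




theorem propositionS3:
  fixes M :: "(real^'m^'m) set" and c :: real
  assumes "0 < c"
    and "M = laplacian_space c \<or> M = covariance_space c"
  shows
   "(\<exists>C1>0. \<forall>\<alpha>\<in>M. \<forall>\<beta>\<in>M. \<forall>\<omega>\<in>M. \<forall>\<zeta>\<in>M.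
        frob_dist (transport \<alpha> \<beta> \<omega>) (transport \<alpha> \<beta> \<zeta>) \<le> C1 * frob_dist \<omega> \<zeta>)
  \<and> (\<exists>C2>0. \<forall>\<alpha>1\<in>M. \<forall>\<alpha>2\<in>M. \<forall>\<beta>1\<in>M. \<forall>\<beta>2\<in>M. \<forall>\<omega>\<in>M.
        frob_dist (transport \<alpha>1 \<beta>1 \<omega>) (transport \<alpha>2 \<beta>2 \<omega>)
          \<le> C2 * (frob_dist \<alpha>1 \<alpha>2 + frob_dist \<beta>1 \<beta>2))
  \<and> (\<forall>(P :: 'a measure) (Y :: 'a \<Rightarrow> real^'m^'m).
       prob_space P \<and> Y \<in> borel_measurable P \<and> (\<forall>x\<in>space P. Y x \<in> M) \<longrightarrow>
       (\<exists>\<nu>. \<nu> \<in> M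
          \<and> (\<forall>\<omega>\<in>M. (\<integral>x. (frob_dist (Y x) \<nu>)^2 \<partial>P) \<le> (\<integral>x. (frob_dist (Y x) \<omega>)^2 \<partial>P))
          \<and> (\<forall>\<nu>'\<in>M. (\<forall>\<omega>\<in>M. (\<integral>x. (frob_dist (Y x) \<nu>')^2 \<partial>P) \<le> (\<integral>x. (frob_dist (Y x) \<omega>)^2 \<partial>P))
                 \<longrightarrow> \<nu>' = \<nu>)
          \<and> (\<forall>\<epsilon>>0. (INF \<omega>\<in>{\<omega>\<in>M. frob_dist \<nu> \<omega> > \<epsilon>}. ereal (\<integral>x. (frob_dist (Y x) \<omega>)^2 \<partial>P))
                     > ereal (\<integral>x. (frob_dist (Y x) \<nu>)^2 \<partial>P))
          \<and> (\<forall>\<^sub>F \<delta> in at_right 0.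
               (\<lambda>\<epsilon>. sqrt (1 + ln (real (covering_number M (\<delta> * \<epsilon>) (frob_ball M \<nu> \<delta>)))))
                 integrable_on {0..1})
          \<and> (\<lambda>\<delta>. integral {0..1}
                 (\<lambda>\<epsilon>. sqrt (1 + ln (real (covering_number M (\<delta> * \<epsilon>) (frob_ball M \<nu> \<delta>))))))
              \<in> O[at_right 0](\<lambda>_. 1)
          \<and> (\<exists>\<eta>>0. \<exists>C>0. \<exists>\<kappa>>1. \<forall>\<omega>\<in>M. frob_dist \<nu> \<omega> < \<eta> \<longrightarrow>
               (\<integral>x. (frob_dist (Y x) \<omega>)^2 \<partial>P) - (\<integral>x. (frob_dist (Y x) \<nu>)^2 \<partial>P)
                 \<ge> C * frob_dist \<nu> \<omega> powr \<kappa>))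
     \<and> (\<forall>Ys :: nat \<Rightarrow> 'a \<Rightarrow> real^'m^'m.
          prob_space.indep_vars P (\<lambda>_. borel) Ys UNIV
          \<and> (\<forall>i. Ys i \<in> borel_measurable P \<and> distr P borel (Ys i) = distr P borel Y) \<longrightarrow>
          (\<forall>n>0. AE x in P. \<exists>!\<omega>. \<omega> \<in> M \<and>
              (\<forall>\<zeta>\<in>M. (\<Sum>i<n. (frob_dist (Ys i x) \<omega>)^2) \<le> (\<Sum>i<n. (frob_dist (Ys i x) \<zeta>)^2)))))"
proof -
  have Mp: "compact M \<and> convex M \<and> (0::real^'m^'m) \<in> M"
    using assms lap_props[OF assms(1)] cov_props[OF assms(1)] by (cases "M = laplacian_space c") auto
  then have Mc: "convex M" "closed M" "M \<noteq> {}" by (auto intro: compact_imp_closed)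
  obtain B where B: "\<And>z. z \<in> M \<Longrightarrow> norm z \<le> B"
    using compact_imp_bounded[of M] Mp unfolding bounded_iff by auto
  have P1: "\<exists>C1>0. \<forall>\<alpha>\<in>M. \<forall>\<beta>\<in>M. \<forall>\<omega>\<in>M. \<forall>\<zeta>\<in>M.
        frob_dist (transport \<alpha> \<beta> \<omega>) (transport \<alpha> \<beta> \<zeta>) \<le> C1 * frob_dist \<omega> \<zeta>"
    by (rule exI[of _ 1]) (simp add: frob_dist_eq transport_def dist_norm)
  have P2: "\<exists>C2>0. \<forall>\<alpha>1\<in>M. \<forall>\<alpha>2\<in>M. \<forall>\<beta>1\<in>M. \<forall>\<beta>2\<in>M. \<forall>\<omega>\<in>M.
        frob_dist (transport \<alpha>1 \<beta>1 \<omega>) (transport \<alpha>2 \<beta>2 \<omega>)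
          \<le> C2 * (frob_dist \<alpha>1 \<alpha>2 + frob_dist \<beta>1 \<beta>2)"
  proof (rule exI[of _ 1], intro conjI ballI)
    fix \<alpha>1 \<alpha>2 \<beta>1 \<beta>2 \<omega> :: "real^'m^'m"
    have eq: "(\<omega> + (\<beta>1 - \<alpha>1)) - (\<omega> + (\<beta>2 - \<alpha>2)) = (\<beta>1 - \<beta>2) - (\<alpha>1 - \<alpha>2)" by (simp add: algebra_simps)
    have "norm ((\<beta>1 - \<beta>2) - (\<alpha>1 - \<alpha>2)) \<le> norm (\<beta>1 - \<beta>2) + norm (\<alpha>1 - \<alpha>2)" by (rule norm_triangle_ineq4)
    then show "frob_dist (transport \<alpha>1 \<beta>1 \<omega>) (transport \<alpha>2 \<beta>2 \<omega>) \<le> 1 * (frob_dist \<alpha>1 \<alpha>2 + frob_dist \<beta>1 \<beta>2)"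
      unfolding frob_dist_eq transport_def dist_norm eq by simp
  qed simp
  have P3: "prob_space P \<and> Y \<in> borel_measurable P \<and> (\<forall>x\<in>space P. Y x \<in> M) \<longrightarrow>
       (\<exists>\<nu>. \<nu> \<in> M
          \<and> (\<forall>\<omega>\<in>M. (\<integral>x. (frob_dist (Y x) \<nu>)^2 \<partial>P) \<le> (\<integral>x. (frob_dist (Y x) \<omega>)^2 \<partial>P))
          \<and> (\<forall>\<nu>'\<in>M. (\<forall>\<omega>\<in>M. (\<integral>x. (frob_dist (Y x) \<nu>')^2 \<partial>P) \<le> (\<integral>x. (frob_dist (Y x) \<omega>)^2 \<partial>P))
                 \<longrightarrow> \<nu>' = \<nu>)
          \<and> (\<forall>\<epsilon>>0. (INF \<omega>\<in>{\<omega>\<in>M. frob_dist \<nu> \<omega> > \<epsilon>}. ereal (\<integral>x. (frob_dist (Y x) \<omega>)^2 \<partial>P))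
                     > ereal (\<integral>x. (frob_dist (Y x) \<nu>)^2 \<partial>P))
          \<and> (\<forall>\<^sub>F \<delta> in at_right 0.
               (\<lambda>\<epsilon>. sqrt (1 + ln (real (covering_number M (\<delta> * \<epsilon>) (frob_ball M \<nu> \<delta>)))))
                 integrable_on {0..1})
          \<and> (\<lambda>\<delta>. integral {0..1}
                 (\<lambda>\<epsilon>. sqrt (1 + ln (real (covering_number M (\<delta> * \<epsilon>) (frob_ball M \<nu> \<delta>))))))
              \<in> O[at_right 0](\<lambda>_. 1)
          \<and> (\<exists>\<eta>>0. \<exists>C>0. \<exists>\<kappa>>1. \<forall>\<omega>\<in>M. frob_dist \<nu> \<omega> < \<eta> \<longrightarrow>
               (\<integral>x. (frob_dist (Y x) \<omega>)^2 \<partial>P) - (\<integral>x. (frob_dist (Y x) \<nu>)^2 \<partial>P)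
                 \<ge> C * frob_dist \<nu> \<omega> powr \<kappa>))
     \<and> (\<forall>Ys :: nat \<Rightarrow> 'a \<Rightarrow> real^'m^'m.
          prob_space.indep_vars P (\<lambda>_. borel) Ys UNIV
          \<and> (\<forall>i. Ys i \<in> borel_measurable P \<and> distr P borel (Ys i) = distr P borel Y) \<longrightarrow>
          (\<forall>n>0. AE x in P. \<exists>!\<omega>. \<omega> \<in> M \<and>
              (\<forall>\<zeta>\<in>M. (\<Sum>i<n. (frob_dist (Ys i x) \<omega>)^2) \<le> (\<Sum>i<n. (frob_dist (Ys i x) \<zeta>)^2))))"
    for P :: "'a measure" and Y :: "'a \<Rightarrow> real^'m^'m"
  proof (intro impI conjI)
    assume H: "prob_space P \<and> Y \<in> borel_measurable P \<and> (\<forall>x\<in>space P. Y x \<in> M)"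
    then have PP: "prob_space P" and Ym: "Y \<in> borel_measurable P" and YM: "\<And>x. x \<in> space P \<Longrightarrow> Y x \<in> M" by auto
    have YB: "\<And>x. x \<in> space P \<Longrightarrow> norm (Y x) \<le> B" using YM B by blast
    define \<mu> where "\<mu> = integral\<^sup>L P Y"
    define V where "V = (\<integral>x. (dist (Y x) \<mu>)^2 \<partial>P)"
    define F where "F = (\<lambda>\<omega>. (\<integral>x. (frob_dist (Y x) \<omega>)^2 \<partial>P))"
    have Feq0: "\<And>\<omega>. F \<omega> = V + (dist \<mu> \<omega>)^2"
      unfolding F_def V_def \<mu>_def frob_dist_eq by (rule exp_decomp(3)[OF PP Ym YB])
    have Feq: "\<And>\<omega>. F \<omega> = V + 1 * (dist \<mu> \<omega>)^2" using Feq0 by (simp only: mult_1)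
    have Fapp: "\<And>\<omega>. (\<integral>x. (frob_dist (Y x) \<omega>)^2 \<partial>P) = F \<omega>" by (simp add: F_def)
    define \<nu> where "\<nu> = closest_point M \<mu>"
    have nuM: "\<nu> \<in> M" unfolding \<nu>_def by (rule quad_min(1)[OF Mc _ Feq]) simp
    have ineq: "\<And>\<omega>. \<omega> \<in> M \<Longrightarrow> F \<nu> + 1 * (dist \<nu> \<omega>)^2 \<le> F \<omega>"
      unfolding \<nu>_def by (rule quad_min(2)[OF Mc _ Feq]) simp_all
    have uniq: "\<And>\<nu>'. \<nu>' \<in> M \<Longrightarrow> (\<forall>\<omega>\<in>M. F \<nu>' \<le> F \<omega>) \<Longrightarrow> \<nu>' = \<nu>"
      unfolding \<nu>_def by (rule quad_min(3)[OF Mc _ Feq]) simp_all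
    have minF: "\<forall>\<omega>\<in>M. F \<nu> \<le> F \<omega>"
    proof
      fix \<omega> assume "\<omega> \<in> M"
      from ineq[OF this] show "F \<nu> \<le> F \<omega>" using zero_le_power2[of "dist \<nu> \<omega>"] by linarith
    qed
    have sep: "\<forall>\<epsilon>>0. (INF \<omega>\<in>{\<omega>\<in>M. frob_dist \<nu> \<omega> > \<epsilon>}. ereal (F \<omega>)) > ereal (F \<nu>)"
    proof (intro allI impI)
      fix \<epsilon> :: real assume e: "0 < \<epsilon>"
      have "ereal (F \<nu> + \<epsilon>^2) \<le> (INF \<omega>\<in>{\<omega>\<in>M. frob_dist \<nu> \<omega> > \<epsilon>}. ereal (F \<omega>))"
      proof (rule INF_greatest)
        fix \<omega> assume w: "\<omega> \<in> {\<omega>\<in>M. frob_dist \<nu> \<omega> > \<epsilon>}"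
        then have "\<epsilon> < dist \<nu> \<omega>" by (simp add: frob_dist_eq)
        then have "\<epsilon>^2 \<le> (dist \<nu> \<omega>)^2" using e by (intro power_mono) auto
        then show "ereal (F \<nu> + \<epsilon>^2) \<le> ereal (F \<omega>)" using ineq[of \<omega>] w by simp
      qed
      moreover have "ereal (F \<nu>) < ereal (F \<nu> + \<epsilon>^2)" using e by simp
      ultimately show "(INF \<omega>\<in>{\<omega>\<in>M. frob_dist \<nu> \<omega> > \<epsilon>}. ereal (F \<omega>)) > ereal (F \<nu>)"
        by (meson less_le_trans)
    qed
    have cf: "\<And>\<delta>. (\<lambda>\<epsilon>. sqrt (1 + ln (real (covering_number M (\<delta> * \<epsilon>) (frob_ball M \<nu> \<delta>))))) = cfun M \<nu> \<delta>"
      by (simp add: cfun_def fun_eq_iff)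
    have ev: "\<forall>\<^sub>F \<delta> in at_right 0. (0::real) < \<delta>" by (rule eventually_at_right_less)
    have intg: "\<forall>\<^sub>F \<delta> in at_right 0. cfun M \<nu> \<delta> integrable_on {0..1}"
      using ev by eventually_elim (rule cfun_integral(1)[OF nuM])
    define G where "G = integral {0..1::real} (\<lambda>\<epsilon>::real. 1 + sqrt (real (CARD('m) * CARD('m)) * (2 * sqrt (real (CARD('m) * CARD('m))) + 3)) * \<epsilon> powr (-1/2))"
    have bo: "(\<lambda>\<delta>. integral {0..1} (cfun M \<nu> \<delta>)) \<in> O[at_right 0](\<lambda>_. 1)"
    proof (rule bigoI[where c = G])
      show "\<forall>\<^sub>F \<delta> in at_right 0. norm (integral {0..1} (cfun M \<nu> \<delta>)) \<le> G * norm (1::real)"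
        using ev
      proof eventually_elim
        case (elim \<delta>)
        have "0 \<le> integral {0..1} (cfun M \<nu> \<delta>)" by (rule cfun_integral(2)[OF nuM elim])
        moreover have "integral {0..1} (cfun M \<nu> \<delta>) \<le> G" unfolding G_def by (rule cfun_integral(3)[OF nuM elim])
        ultimately show ?case by simp
      qed
    qed
    have pw2: "\<And>x::real. 0 \<le> x \<Longrightarrow> x powr 2 = x^2" by simp
    have loc: "\<exists>\<eta>>0. \<exists>C>0. \<exists>\<kappa>>1. \<forall>\<omega>\<in>M. frob_dist \<nu> \<omega> < \<eta> \<longrightarrow> F \<omega> - F \<nu> \<ge> C * frob_dist \<nu> \<omega> powr \<kappa>"
    proof (rule exI[of _ 1], rule conjI, simp, rule exI[of _ 1], rule conjI, simp,
        rule exI[of _ 2], rule conjI, simp, intro ballI impI)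
      fix \<omega> assume "\<omega> \<in> M"
      from ineq[OF this] show "F \<omega> - F \<nu> \<ge> 1 * frob_dist \<nu> \<omega> powr 2"
        by (simp add: frob_dist_eq)
    qed
    show "\<exists>\<nu>. \<nu> \<in> M
          \<and> (\<forall>\<omega>\<in>M. (\<integral>x. (frob_dist (Y x) \<nu>)^2 \<partial>P) \<le> (\<integral>x. (frob_dist (Y x) \<omega>)^2 \<partial>P))
          \<and> (\<forall>\<nu>'\<in>M. (\<forall>\<omega>\<in>M. (\<integral>x. (frob_dist (Y x) \<nu>')^2 \<partial>P) \<le> (\<integral>x. (frob_dist (Y x) \<omega>)^2 \<partial>P))
                 \<longrightarrow> \<nu>' = \<nu>)
          \<and> (\<forall>\<epsilon>>0. (INF \<omega>\<in>{\<omega>\<in>M. frob_dist \<nu> \<omega> > \<epsilon>}. ereal (\<integral>x. (frob_dist (Y x) \<omega>)^2 \<partial>P))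
                     > ereal (\<integral>x. (frob_dist (Y x) \<nu>)^2 \<partial>P))
          \<and> (\<forall>\<^sub>F \<delta> in at_right 0.
               (\<lambda>\<epsilon>. sqrt (1 + ln (real (covering_number M (\<delta> * \<epsilon>) (frob_ball M \<nu> \<delta>)))))
                 integrable_on {0..1})
          \<and> (\<lambda>\<delta>. integral {0..1}
                 (\<lambda>\<epsilon>. sqrt (1 + ln (real (covering_number M (\<delta> * \<epsilon>) (frob_ball M \<nu> \<delta>))))))
              \<in> O[at_right 0](\<lambda>_. 1)
          \<and> (\<exists>\<eta>>0. \<exists>C>0. \<exists>\<kappa>>1. \<forall>\<omega>\<in>M. frob_dist \<nu> \<omega> < \<eta> \<longrightarrow>
               (\<integral>x. (frob_dist (Y x) \<omega>)^2 \<partial>P) - (\<integral>x. (frob_dist (Y x) \<nu>)^2 \<partial>P)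
                 \<ge> C * frob_dist \<nu> \<omega> powr \<kappa>)"
    proof (rule exI[of _ \<nu>], unfold cf Fapp, intro conjI)
      show "\<forall>\<nu>'\<in>M. (\<forall>\<omega>\<in>M. F \<nu>' \<le> F \<omega>) \<longrightarrow> \<nu>' = \<nu>" using uniq by blast
    qed (fact nuM minF sep intg bo loc)+
    show "\<forall>Ys :: nat \<Rightarrow> 'a \<Rightarrow> real^'m^'m.
          prob_space.indep_vars P (\<lambda>_. borel) Ys UNIV
          \<and> (\<forall>i. Ys i \<in> borel_measurable P \<and> distr P borel (Ys i) = distr P borel Y) \<longrightarrow>
          (\<forall>n>0. AE x in P. \<exists>!\<omega>. \<omega> \<in> M \<and>
              (\<forall>\<zeta>\<in>M. (\<Sum>i<n. (frob_dist (Ys i x) \<omega>)^2) \<le> (\<Sum>i<n. (frob_dist (Ys i x) \<zeta>)^2)))"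
    proof (intro allI impI AE_I2)
      fix Ys :: "nat \<Rightarrow> 'a \<Rightarrow> real^'m^'m" and n :: nat and x
      assume n: "0 < n"
      define m where "m = (1 / real n) *\<^sub>R (\<Sum>i<n. Ys i x)"
      define K where "K = (\<Sum>i<n. (dist (Ys i x) m)^2)"
      define Fs where "Fs = (\<lambda>\<omega>. (\<Sum>i<n. (frob_dist (Ys i x) \<omega>)^2))"
      have Fseq: "\<And>\<omega>. Fs \<omega> = K + real n * (dist m \<omega>)^2"
        unfolding Fs_def K_def m_def frob_dist_eq by (rule sample_decomp[OF n])
      have a: "0 < real n" using n by simp
      have in1: "closest_point M m \<in> M" by (rule quad_min(1)[OF Mc a Fseq])
      have min1: "\<forall>\<zeta>\<in>M. Fs (closest_point M m) \<le> Fs \<zeta>"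
      proof
        fix \<zeta> assume z: "\<zeta> \<in> M"
        have "Fs (closest_point M m) + real n * (dist (closest_point M m) \<zeta>)^2 \<le> Fs \<zeta>"
          by (rule quad_min(2)[OF Mc a Fseq z])
        moreover have "0 \<le> real n * (dist (closest_point M m) \<zeta>)^2" by simp
        ultimately show "Fs (closest_point M m) \<le> Fs \<zeta>" by linarith
      qed
      have "\<exists>!\<omega>. \<omega> \<in> M \<and> (\<forall>\<zeta>\<in>M. Fs \<omega> \<le> Fs \<zeta>)"
      proof (rule ex1I[of _ "closest_point M m"])
        show "closest_point M m \<in> M \<and> (\<forall>\<zeta>\<in>M. Fs (closest_point M m) \<le> Fs \<zeta>)" using in1 min1 by blast
        fix \<omega> assume "\<omega> \<in> M \<and> (\<forall>\<zeta>\<in>M. Fs \<omega> \<le> Fs \<zeta>)"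
        then show "\<omega> = closest_point M m" using quad_min(3)[OF Mc a Fseq] by blast
      qed
      then show "\<exists>!\<omega>. \<omega> \<in> M \<and>
              (\<forall>\<zeta>\<in>M. (\<Sum>i<n. (frob_dist (Ys i x) \<omega>)^2) \<le> (\<Sum>i<n. (frob_dist (Ys i x) \<zeta>)^2))"
        unfolding Fs_def .
    qed
  qed
  show ?thesis
    apply (intro conjI P1 P2 allI)
    apply (rule P3)
    done
qed


end
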